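(* Fix $\beta\ge1$ and let $\{X_i\}_{i\ge1}$, $W_n$, $\xi$, $\mathcal H$ and $\alpha$ be as in the context, with $\sup_{i\ge1}\mathbb E[|X_i|^{2+\alpha}]<\infty$. Fix $f\in\mathcal H$ and let $\xi_k:=f(W_k)-\mathbb E[f(W_k)]$ and $Z_l:=\sum_{4^{l-1}\le i<4^l}\frac{\xi_i}{i}$. Then there exists a positive constant $M_5$ such that for all $1\le n_1\le n_2$, $$\sum_{l=n_1}^{n_2}\mathbb E[Z_l^2]\le M_5\,(n_2-n_1+1).$$
   Context: Sub-linear expectation space $(\Omega,\mathscr H,\mathbb E)$: $(\Omega,\mathcal F)$ a measurable space, $\mathscr H$ a linear space of real measurable functions closed under $(X_1,\dots,X_n)\mapsto\varphi(X_1,\dots,X_n)$ for $\varphi\in C_{b,Lip}(\mathbb R^n)$ (bounded Lipschitz functions), and $\mathbb E:\mathscr H\to\mathbb R$ monotone, constant preserving, sub-additive and positively homogeneous; it is assumed $\mathbb E[X]=\sup_{P\in\mathcal P}E_P[X]$ for a family $\mathcal P$ of $\sigma$-additive probability measures. $(\widetilde\Omega,\widetilde{\mathscr H},\widetilde{\mathbb E})$ is another sub-linear expectation space. Both satisfy condition (A): for every $X$ and every sequence $f_n\in C_{b,Lip}(\mathbb R)$ with $f_n\downarrow0$, $\mathbb E[f_n(X)]\downarrow0$ (resp. $\widetilde{\mathbb E}[f_n(X)]\downarrow0$). Independence: $Y\in\mathscr H^n$ is independent of $X\in\mathscr H^m$ if $\mathbb E[\varphi(X,Y)]=\mathbb E\big[\mathbb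 E[\varphi(x,Y)]|_{x=X}\big]$ for all $\varphi\in C_{b,Lip}(\mathbb R^{m+n})$; $\{X_n\}$ is independent if $X_{n+1}$ is independent of $(X_1,\dots,X_n)$ for every $n$. Standing setting: $\{X_i\}$ is independent in $(\Omega,\mathscr H,\mathbb E)$ with $\mathbb E[X_i]=\mathbb E[-X_i]=0$, $\overline\sigma_i=\sqrt{\mathbb E[X_i^2]}$, $\underline\sigma_i=\sqrt{-\mathbb E[-X_i^2]}$, $\overline\sigma_i/\underline\sigma_i=\beta$ for all $i$, $0<\inf_i\underline\sigma_i^2\le\sup_i\overline\sigma_i^2<\infty$; $S_n=\sum_{i\le n}X_i$, $\sigma_i=(\underline\sigma_i+\overline\sigma_i)/2$, $B_n=\sqrt{\sum_{i\le n}\sigma_i^2}$, $W_n=S_n/B_n$. $\xi$ is $G$-normal under $\widetilde{\mathbb E}$ (for each $f\in C_{b,Lip}(\mathbb R)$, $u(t,x)=\widetilde{\mathbb E}[f(x+\sqrt t\xi)]$ is the unique viscosity solution of $\partial_tu-G(\partial_{xx}u)=0$, $u(0,\cdot)=f$, with $G(a)=\frac12\widetilde{\mathbb E}[a\xi^2]$), with $\sqrt{\widetilde{\mathbb E}[\xi^2]}=\frac{2\beta}{1+\beta}$, $\sqrt{-\widetilde{\mathbb E}[-\xi^2]}=\frac{2}{1+\beta}$. $\mathcal H:=\{f\in C_{b,Lip}(\mathbb R):\widetilde{\mathbb E}[f(\xi)]=-\widetilde{\mathbb E}[-f(\xi)]\}$. $\alpha\in(0,1)$ is the constant from Song's theorem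 (cited): there exist $\alpha\in(0,1)$ depending on $\beta$ and $C_{\alpha,\beta}>0$ such that for every such sequence and every $n$, $\sup_{|f|_{Lip}\le1}|\mathbb E[f(W_n)]-\widetilde{\mathbb E}[f(\xi)]|\le C_{\alpha,\beta}\sup_{1\le i\le n}\{\frac{\mathbb E[|X_i|^{2+\alpha}]}{\sigma_i^{2+\alpha}}(\frac{\sigma_i}{B_n})^\alpha\}$. *)

theory Defs
  imports "HOL-Probability.Probability"
begin

text \<open>Vectors in R^n are represented as real lists of length n (Euclidean norm).\<close>

definition cblip :: "nat \<Rightarrow> (real list \<Rightarrow> real) \<Rightarrow> bool" where
  "cblip n \<phi> \<longleftrightarrow>
     (\<exists>B. \<forall>x. length x = n \<longrightarrow> \<bar>\<phi> x\<bar> \<le> B) \<and>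
     (\<exists>L. \<forall>x y. length x = n \<longrightarrow> length y = n \<longrightarrow>
          \<bar>\<phi> x - \<phi> y\<bar> \<le> L * sqrt (\<Sum>i<n. (x ! i - y ! i)\<^sup>2))"

definition cbl1 :: "(real \<Rightarrow> real) \<Rightarrow> bool" where
  "cbl1 g \<longleftrightarrow> (\<exists>B. \<forall>x. \<bar>g x\<bar> \<le> B) \<and> (\<exists>L. \<forall>x y. \<bar>g x - g y\<bar> \<le> L * \<bar>x - y\<bar>)"

definition vals :: "('a \<Rightarrow> real) list \<Rightarrow> 'a \<Rightarrow> real list" where
  "vals Xs \<omega> = map (\<lambda>X. X \<omega>) Xs"

definition sublinear_space :: "('a \<Rightarrow> real) set \<Rightarrow> (('a \<Rightarrow> real) \<Rightarrow> real) \<Rightarrow> bool" where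
  "sublinear_space H E \<longleftrightarrow>
     \<comment> \<open>linear space\<close>
     (\<lambda>_. 0) \<in> H \<and>
     (\<forall>X\<in>H. \<forall>Y\<in>H. (\<lambda>\<omega>. X \<omega> + Y \<omega>) \<in> H) \<and>
     (\<forall>X\<in>H. \<forall>c. (\<lambda>\<omega>. c * X \<omega>) \<in> H) \<and>
     \<comment> \<open>closed under bounded Lipschitz compositions\<close>
     (\<forall>Xs \<phi>. set Xs \<subseteq> H \<longrightarrow> cblip (length Xs) \<phi> \<longrightarrow> (\<lambda>\<omega>. \<phi> (vals Xs \<omega>)) \<in> H) \<and>
     \<comment> \<open>monotone, constant preserving, sub-additive, positively homogeneous\<close>
     (\<forall>X\<in>H. \<forall>Y\<in>H. (\<forall>\<omega>. X \<omega> \<le> Y \<omega>) \<longrightarrow> E X \<le> E Y) \<and>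
     (\<forall>c. E (\<lambda>_. c) = c) \<and>
     (\<forall>X\<in>H. \<forall>Y\<in>H. E (\<lambda>\<omega>. X \<omega> + Y \<omega>) \<le> E X + E Y) \<and>
     (\<forall>X\<in>H. \<forall>c\<ge>0. E (\<lambda>\<omega>. c * X \<omega>) = c * E X) \<and>
     \<comment> \<open>measurable structure and representation by sigma-additive probabilities\<close>
     (\<exists>M \<P>. space M = UNIV \<and> \<P> \<noteq> {} \<and>
        (\<forall>P\<in>\<P>. prob_space P \<and> space P = space M \<and> sets P = sets M) \<and>
        (\<forall>X\<in>H. X \<in> borel_measurable M \<and> (\<forall>P\<in>\<P>. integrable P X) \<and>
                E X = (SUP P\<in>\<P>. (\<integral>\<omega>. X \<omega> \<partial>P))))"

definition condA :: "('a \<Rightarrow> real) set \<Rightarrow> (('a \<Rightarrow> real) \<Rightarrow> real) \<Rightarrow> bool" where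
  "condA H E \<longleftrightarrow>
     (\<forall>X\<in>H. \<forall>fs :: nat \<Rightarrow> real \<Rightarrow> real.
        (\<forall>n. cbl1 (fs n)) \<longrightarrow> (\<forall>x. decseq (\<lambda>n. fs n x) \<and> (\<lambda>n. fs n x) \<longlonglongrightarrow> 0) \<longrightarrow>
        decseq (\<lambda>n. E (\<lambda>\<omega>. fs n (X \<omega>))) \<and> (\<lambda>n. E (\<lambda>\<omega>. fs n (X \<omega>))) \<longlonglongrightarrow> 0)"

text \<open>\<open>indep E Xs Ys\<close>: the vector Ys is independent of the vector Xs.\<close>

definition indep :: "(('a \<Rightarrow> real) \<Rightarrow> real) \<Rightarrow> ('a \<Rightarrow> real) list \<Rightarrow> ('a \<Rightarrow> real) list \<Rightarrow> bool" where
  "indep E Xs Ys \<longleftrightarrow>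
     (\<forall>\<phi>. cblip (length Xs + length Ys) \<phi> \<longrightarrow>
        E (\<lambda>\<omega>. \<phi> (vals Xs \<omega> @ vals Ys \<omega>)) =
        E (\<lambda>\<omega>. E (\<lambda>\<omega>'. \<phi> (vals Xs \<omega> @ vals Ys \<omega>'))))"

text \<open>Sequences are indexed from 1.\<close>

definition indep_seq :: "(('a \<Rightarrow> real) \<Rightarrow> real) \<Rightarrow> (nat \<Rightarrow> 'a \<Rightarrow> real) \<Rightarrow> bool" where
  "indep_seq E X \<longleftrightarrow> (\<forall>n\<ge>1. indep E (map X [1..<n+1]) [X (n+1)])"

definition sig_up :: "(('a \<Rightarrow> real) \<Rightarrow> real) \<Rightarrow> (nat \<Rightarrow> 'a \<Rightarrow> real) \<Rightarrow> nat \<Rightarrow> real" where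
  "sig_up E X i = sqrt (E (\<lambda>\<omega>. (X i \<omega>)\<^sup>2))"

definition sig_lo :: "(('a \<Rightarrow> real) \<Rightarrow> real) \<Rightarrow> (nat \<Rightarrow> 'a \<Rightarrow> real) \<Rightarrow> nat \<Rightarrow> real" where
  "sig_lo E X i = sqrt (- E (\<lambda>\<omega>. - (X i \<omega>)\<^sup>2))"

definition sig :: "(('a \<Rightarrow> real) \<Rightarrow> real) \<Rightarrow> (nat \<Rightarrow> 'a \<Rightarrow> real) \<Rightarrow> nat \<Rightarrow> real" where
  "sig E X i = (sig_lo E X i + sig_up E X i) / 2"

definition Bn :: "(('a \<Rightarrow> real) \<Rightarrow> real) \<Rightarrow> (nat \<Rightarrow> 'a \<Rightarrow> real) \<Rightarrow> nat \<Rightarrow> real" where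
  "Bn E X n = sqrt (\<Sum>i=1..n. (sig E X i)\<^sup>2)"

definition Wn :: "(('a \<Rightarrow> real) \<Rightarrow> real) \<Rightarrow> (nat \<Rightarrow> 'a \<Rightarrow> real) \<Rightarrow> nat \<Rightarrow> 'a \<Rightarrow> real" where
  "Wn E X n \<omega> = (\<Sum>i=1..n. X i \<omega>) / Bn E X n"

definition std_seq :: "('a \<Rightarrow> real) set \<Rightarrow> (('a \<Rightarrow> real) \<Rightarrow> real) \<Rightarrow> real \<Rightarrow> (nat \<Rightarrow> 'a \<Rightarrow> real) \<Rightarrow> bool" where
  "std_seq H E \<beta> X \<longleftrightarrow>
     (\<forall>i\<ge>1. X i \<in> H \<and> (\<lambda>\<omega>. (X i \<omega>)\<^sup>2) \<in> H \<and>
            E (X i) = 0 \<and> E (\<lambda>\<omega>. - X i \<omega>) = 0 \<and>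
            sig_up E X i / sig_lo E X i = \<beta>) \<and>
     (\<exists>a b. 0 < a \<and> (\<forall>i\<ge>1. a \<le> (sig_lo E X i)\<^sup>2 \<and> (sig_up E X i)\<^sup>2 \<le> b)) \<and>
     indep_seq E X"

definition G_of :: "(('b \<Rightarrow> real) \<Rightarrow> real) \<Rightarrow> ('b \<Rightarrow> real) \<Rightarrow> real \<Rightarrow> real" where
  "G_of Et \<xi> a = Et (\<lambda>\<omega>. a * (\<xi> \<omega>)\<^sup>2) / 2"

definition test_fn :: "(real \<Rightarrow> real \<Rightarrow> real) \<Rightarrow> (real \<Rightarrow> real \<Rightarrow> real) \<Rightarrow>
    (real \<Rightarrow> real \<Rightarrow> real) \<Rightarrow> (real \<Rightarrow> real \<Rightarrow> real) \<Rightarrow> bool" where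
  "test_fn \<phi> \<phi>t \<phi>x \<phi>xx \<longleftrightarrow>
     continuous_on UNIV (\<lambda>(s, y). \<phi> s y) \<and> continuous_on UNIV (\<lambda>(s, y). \<phi>t s y) \<and>
     continuous_on UNIV (\<lambda>(s, y). \<phi>x s y) \<and> continuous_on UNIV (\<lambda>(s, y). \<phi>xx s y) \<and>
     (\<forall>s y. ((\<lambda>r. \<phi> r y) has_real_derivative \<phi>t s y) (at s) \<and>
            ((\<lambda>z. \<phi> s z) has_real_derivative \<phi>x s y) (at y) \<and>
            ((\<lambda>z. \<phi>x s z) has_real_derivative \<phi>xx s y) (at y))"

definition visc_sub :: "(real \<Rightarrow> real) \<Rightarrow> (real \<Rightarrow> real \<Rightarrow> real) \<Rightarrow> bool" where
  "visc_sub G u \<longleftrightarrow>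
     (\<forall>t x \<phi> \<phi>t \<phi>x \<phi>xx. t > 0 \<and> test_fn \<phi> \<phi>t \<phi>x \<phi>xx \<and> \<phi> t x = u t x \<and>
        (\<forall>s y. s > 0 \<longrightarrow> u s y \<le> \<phi> s y) \<longrightarrow> \<phi>t t x - G (\<phi>xx t x) \<le> 0)"

definition visc_super :: "(real \<Rightarrow> real) \<Rightarrow> (real \<Rightarrow> real \<Rightarrow> real) \<Rightarrow> bool" where
  "visc_super G u \<longleftrightarrow>
     (\<forall>t x \<phi> \<phi>t \<phi>x \<phi>xx. t > 0 \<and> test_fn \<phi> \<phi>t \<phi>x \<phi>xx \<and> \<phi> t x = u t x \<and>
        (\<forall>s y. s > 0 \<longrightarrow> \<phi> s y \<le> u s y) \<longrightarrow> \<phi>t t x - G (\<phi>xx t x) \<ge> 0)"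

definition visc_sol :: "(real \<Rightarrow> real) \<Rightarrow> (real \<Rightarrow> real \<Rightarrow> real) \<Rightarrow> bool" where
  "visc_sol G u \<longleftrightarrow>
     continuous_on ({0..} \<times> UNIV) (\<lambda>(t, x). u t x) \<and> visc_sub G u \<and> visc_super G u"

definition G_normal :: "(('b \<Rightarrow> real) \<Rightarrow> real) \<Rightarrow> ('b \<Rightarrow> real) \<Rightarrow> bool" where
  "G_normal Et \<xi> \<longleftrightarrow>
     (\<forall>f. cbl1 f \<longrightarrow>
        (let u = (\<lambda>t x. Et (\<lambda>\<omega>. f (x + sqrt t * \<xi> \<omega>))) in
          visc_sol (G_of Et \<xi>) u \<and> (\<forall>x. u 0 x = f x) \<and>
          (\<forall>v. visc_sol (G_of Et \<xi>) v \<and> (\<forall>x. v 0 x = f x) \<and>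
               (\<exists>B. \<forall>t\<ge>0. \<forall>x. \<bar>v t x\<bar> \<le> B) \<longrightarrow>
               (\<forall>t\<ge>0. \<forall>x. v t x = u t x))))"

definition calH :: "(('b \<Rightarrow> real) \<Rightarrow> real) \<Rightarrow> ('b \<Rightarrow> real) \<Rightarrow> (real \<Rightarrow> real) set" where
  "calH Et \<xi> = {f. cbl1 f \<and> Et (\<lambda>\<omega>. f (\<xi> \<omega>)) = - Et (\<lambda>\<omega>. - f (\<xi> \<omega>))}"

section \<open>Song's Berry-Esseen bound (cited theorem) as a property of alpha\<close>

definition Song_bound :: "('a \<Rightarrow> real) set \<Rightarrow> (('a \<Rightarrow> real) \<Rightarrow> real) \<Rightarrow>
    (('b \<Rightarrow> real) \<Rightarrow> real) \<Rightarrow> ('b \<Rightarrow> real) \<Rightarrow> real \<Rightarrow> real \<Rightarrow> bool" where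
  "Song_bound H E Et \<xi> \<beta> \<alpha> \<longleftrightarrow>
     0 < \<alpha> \<and> \<alpha> < 1 \<and>
     (\<exists>C>0. \<forall>Y. std_seq H E \<beta> Y \<and> (\<forall>i\<ge>1. (\<lambda>\<omega>. \<bar>Y i \<omega>\<bar> powr (2 + \<alpha>)) \<in> H) \<longrightarrow>
        (\<forall>n\<ge>1. \<forall>g. cbl1 g \<and> (\<forall>x y. \<bar>g x - g y\<bar> \<le> \<bar>x - y\<bar>) \<longrightarrow>
           \<bar>E (\<lambda>\<omega>. g (Wn E Y n \<omega>)) - Et (\<lambda>\<omega>. g (\<xi> \<omega>))\<bar> \<le>
           C * (MAX i\<in>{1..n}. E (\<lambda>\<omega>. \<bar>Y i \<omega>\<bar> powr (2 + \<alpha>)) / sig E Y i powr (2 + \<alpha>)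
                              * (sig E Y i / Bn E Y n) powr \<alpha>)))"

end

theory Submission
  imports Defs
begin

lemma sl_raw: assumes "sublinear_space H E" "set Xs \<subseteq> H" "cblip (length Xs) \<phi>"
  shows "(\<lambda>\<omega>. \<phi> (vals Xs \<omega>)) \<in> H"
  using assms(1)[unfolded sublinear_space_def, THEN conjunct2, THEN conjunct2, THEN conjunct2, THEN conjunct1, rule_format, OF assms(2,3)] .

lemma sl_const: assumes "sublinear_space H E" shows "(\<lambda>_. c) \<in> H"
proof -
  have "cblip (length ([]::('a\<Rightarrow>real) list)) (\<lambda>_. c)"
    unfolding cblip_def by (auto intro: exI[of _ "\<bar>c\<bar>"] exI[of _ 0])
  from sl_raw[OF assms _ this] show ?thesis by simp
qed

lemma sl_add: assumes "sublinear_space H E" "X \<in> H" "Y \<in> H" shows "(\<lambda>\<omega>. X \<omega> + Y \<omega>) \<in> H"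
  using assms(1)[unfolded sublinear_space_def, THEN conjunct2, THEN conjunct1, rule_format, OF assms(2,3)] .

lemma sl_scale: assumes "sublinear_space H E" "X \<in> H" shows "(\<lambda>\<omega>. c * X \<omega>) \<in> H"
  using assms(1)[unfolded sublinear_space_def, THEN conjunct2, THEN conjunct2, THEN conjunct1, rule_format, OF assms(2)] .

lemma sl_mono: assumes "sublinear_space H E" "X \<in> H" "Y \<in> H" "\<And>\<omega>. X \<omega> \<le> Y \<omega>" shows "E X \<le> E Y"
  using assms(1)[unfolded sublinear_space_def, THEN conjunct2, THEN conjunct2, THEN conjunct2, THEN conjunct2, THEN conjunct1, rule_format, OF assms(2,3)] assms(4) by blast

lemma sl_Ec: assumes "sublinear_space H E" shows "E (\<lambda>_. c) = c"
  using assms(1)[unfolded sublinear_space_def, THEN conjunct2, THEN conjunct2, THEN conjunct2, THEN conjunct2, THEN conjunct2, THEN conjunct1, rule_format] .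

lemma sl_sum: assumes "sublinear_space H E" "finite S" "\<forall>i\<in>S. F i \<in> H"
  shows "(\<lambda>\<omega>. \<Sum>i\<in>S. F i \<omega>) \<in> H"
  using assms(2,3)
proof (induction S rule: finite_induct)
  case empty
  then show ?case using sl_const[OF assms(1), of 0] by simp
next
  case (insert x F')
  then have "(\<lambda>\<omega>. F x \<omega> + (\<Sum>i\<in>F'. F i \<omega>)) \<in> H" using sl_add[OF assms(1)] by auto
  then show ?case using insert by simp
qed

lemma sl_comp: assumes "sublinear_space H E" "cbl1 g" "X \<in> H" shows "(\<lambda>\<omega>. g (X \<omega>)) \<in> H"
proof -
  obtain B L where B: "\<forall>x. \<bar>g x\<bar> \<le> B" and L: "\<forall>x y. \<bar>g x - g y\<bar> \<le> L * \<bar>x - y\<bar>"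
    using assms(2) unfolding cbl1_def by blast
  have "cblip (length [X]) (\<lambda>xs. g (hd xs))"
    unfolding cblip_def
  proof (intro conjI exI allI impI)
    fix x :: "real list" show "\<bar>g (hd x)\<bar> \<le> B" using B by blast
  next
    fix x y :: "real list" assume "length x = length [X]" "length y = length [X]"
    then obtain a b where "x = [a]" "y = [b]"
      by (cases x; cases y) auto
    then show "\<bar>g (hd x) - g (hd y)\<bar> \<le> L * sqrt (\<Sum>i<length [X]. (x ! i - y ! i)\<^sup>2)"
      using L by simp
  qed
  moreover have "set [X] \<subseteq> H" using assms(3) by simp
  ultimately have "(\<lambda>\<omega>. (\<lambda>xs. g (hd xs)) (vals [X] \<omega>)) \<in> H"
    using sl_raw[OF assms(1)] by blast
  then show ?thesis by (simp add: vals_def)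
qed

lemma clip_sq: assumes "K \<ge> 0" shows "cbl1 (\<lambda>x::real. (max (-K) (min K x))\<^sup>2)"
  unfolding cbl1_def
proof (intro conjI exI allI)
  fix x :: real
  have h: "\<bar>max (-K) (min K x)\<bar> \<le> K" using assms by auto
  show "\<bar>(max (-K) (min K x))\<^sup>2\<bar> \<le> K\<^sup>2"
  proof -
    have "\<bar>max (-K) (min K x)\<bar>\<^sup>2 \<le> K\<^sup>2" by (rule power_mono[OF h]) simp
    then show ?thesis by simp
  qed
next
  fix x y :: real
  let ?a = "max (-K) (min K x)" and ?b = "max (-K) (min K y)"
  have ab: "\<bar>?a - ?b\<bar> \<le> \<bar>x - y\<bar>" by (auto simp: max_def min_def)
  have s: "\<bar>?a + ?b\<bar> \<le> 2*K" using assms by (auto simp: max_def min_def)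
  have "?a\<^sup>2 - ?b\<^sup>2 = (?a - ?b) * (?a + ?b)"
    by (simp add: power2_eq_square algebra_simps)
  then have "\<bar>?a\<^sup>2 - ?b\<^sup>2\<bar> = \<bar>?a - ?b\<bar> * \<bar>?a + ?b\<bar>"
    by (simp add: abs_mult)
  also have "\<dots> \<le> \<bar>x - y\<bar> * (2*K)"
    by (rule mult_mono[OF ab s]) auto
  finally show "\<bar>?a\<^sup>2 - ?b\<^sup>2\<bar> \<le> 2*K * \<bar>x - y\<bar>" by (simp add: mult.commute)
qed

theorem lemma4p4:
  fixes H :: "('a \<Rightarrow> real) set" and E :: "('a \<Rightarrow> real) \<Rightarrow> real"
    and Ht :: "('b \<Rightarrow> real) set" and Et :: "('b \<Rightarrow> real) \<Rightarrow> real"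
    and X :: "nat \<Rightarrow> 'a \<Rightarrow> real" and \<xi> :: "'b \<Rightarrow> real"
    and \<beta> \<alpha> :: real and f :: "real \<Rightarrow> real"
  assumes space: "sublinear_space H E" "condA H E"
    and space_t: "sublinear_space Ht Et" "condA Ht Et"
    and beta: "\<beta> \<ge> 1"
    and seq: "std_seq H E \<beta> X"
    and xi: "\<xi> \<in> Ht" "(\<lambda>\<omega>. (\<xi> \<omega>)\<^sup>2) \<in> Ht" "G_normal Et \<xi>"
      "sqrt (Et (\<lambda>\<omega>. (\<xi> \<omega>)\<^sup>2)) = 2 * \<beta> / (1 + \<beta>)"
      "sqrt (- Et (\<lambda>\<omega>. - (\<xi> \<omega>)\<^sup>2)) = 2 / (1 + \<beta>)"
    and song: "Song_bound H E Et \<xi> \<beta> \<alpha>"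
    and moments: "\<forall>i\<ge>1. (\<lambda>\<omega>. \<bar>X i \<omega>\<bar> powr (2 + \<alpha>)) \<in> H"
      "\<exists>K. \<forall>i\<ge>1. E (\<lambda>\<omega>. \<bar>X i \<omega>\<bar> powr (2 + \<alpha>)) \<le> K"
    and f: "f \<in> calH Et \<xi>"
  shows "\<exists>M5>0. \<forall>n1 n2. 1 \<le> n1 \<and> n1 \<le> n2 \<longrightarrow>
           (\<Sum>l=n1..n2. E (\<lambda>\<omega>. (\<Sum>i\<in>{4^(l-1)..<4^l}.
               (f (Wn E X i \<omega>) - E (\<lambda>\<omega>'. f (Wn E X i \<omega>'))) / real i)\<^sup>2))
           \<le> M5 * real (n2 - n1 + 1)"
proof -
  have sp: "sublinear_space H E" by (rule space(1))
  have cf: "cbl1 f" using f unfolding calH_def by blast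
  then obtain B where fB: "\<forall>x. \<bar>f x\<bar> \<le> B" unfolding cbl1_def by blast
  have B0: "B \<ge> 0" using fB by (meson abs_ge_zero order_trans)
  have XH: "\<forall>j\<ge>1. X j \<in> H" using seq[unfolded std_seq_def, THEN conjunct1] by blast
  have WH: "Wn E X i \<in> H" for i
  proof -
    have "(\<lambda>\<omega>. \<Sum>j\<in>{1..i}. X j \<omega>) \<in> H" by (rule sl_sum[OF sp]) (use XH in auto)
    then have "(\<lambda>\<omega>. (1 / Bn E X i) * (\<Sum>j\<in>{1..i}. X j \<omega>)) \<in> H" by (rule sl_scale[OF sp])
    moreover have "Wn E X i = (\<lambda>\<omega>. (1 / Bn E X i) * (\<Sum>j\<in>{1..i}. X j \<omega>))"
      by (rule ext) (simp add: Wn_def)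
    ultimately show ?thesis by simp
  qed
  define F where "F i = (\<lambda>\<omega>. f (Wn E X i \<omega>))" for i
  have FH: "F i \<in> H" for i unfolding F_def by (rule sl_comp[OF sp cf WH])
  have cB: "\<bar>E (F i)\<bar> \<le> B" for i
  proof -
    have "E (F i) \<le> E (\<lambda>_. B)"
      by (rule sl_mono[OF sp FH sl_const[OF sp]]) (use fB in \<open>simp add: F_def abs_le_iff\<close>)
    moreover have "E (\<lambda>_. -B) \<le> E (F i)"
      by (rule sl_mono[OF sp sl_const[OF sp] FH]) (metis F_def abs_le_iff minus_le_iff fB)
    ultimately show ?thesis using sl_Ec[OF sp] by (simp add: abs_le_iff)
  qed
  define Z where "Z l = (\<lambda>\<omega>. \<Sum>i\<in>{4^(l-1)..<4^l}. (F i \<omega> - E (F i)) / real i)" for l :: nat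
  have ZH: "Z l \<in> H" for l
  proof -
    have "\<forall>i\<in>{4^(l-1)..<4^l}. (\<lambda>\<omega>. (F i \<omega> - E (F i)) / real i) \<in> H"
    proof
      fix i :: nat
      have "(\<lambda>\<omega>. F i \<omega> + (\<lambda>_. - E (F i)) \<omega>) \<in> H"
        by (rule sl_add[OF sp FH sl_const[OF sp]])
      then have "(\<lambda>\<omega>. (1 / real i) * (F i \<omega> + (\<lambda>_. - E (F i)) \<omega>)) \<in> H" by (rule sl_scale[OF sp])
      then show "(\<lambda>\<omega>. (F i \<omega> - E (F i)) / real i) \<in> H" by simp
    qed
    then show ?thesis unfolding Z_def by (rule sl_sum[OF sp, rotated]) simp
  qed
  define K where "K = 6 * B"
  have K0: "K \<ge> 0" using B0 by (simp add: K_def)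
  have Zb: "\<bar>Z l \<omega>\<bar> \<le> K" if l: "l \<ge> 1" for l \<omega>
  proof -
    define a :: nat where "a = 4^(l-1)"
    have a1: "a \<ge> 1" by (simp add: a_def)
    have a4: "(4::nat)^l = 4 * a"
    proof -
      obtain m where "l = Suc m" using l by (cases l) auto
      then show ?thesis by (simp add: a_def)
    qed
    have "\<bar>Z l \<omega>\<bar> \<le> (\<Sum>i\<in>{a..<4*a}. \<bar>(F i \<omega> - E (F i)) / real i\<bar>)"
      unfolding Z_def a_def[symmetric] a4 by (rule sum_abs)
    also have "\<dots> \<le> (\<Sum>i\<in>{a..<4*a}. 2 * B / real a)"
    proof (rule sum_mono)
      fix i assume "i \<in> {a..<4*a}"
      then have ia: "real a \<le> real i" "real a > 0" using a1 by auto
      have n: "\<bar>F i \<omega> - E (F i)\<bar> \<le> 2 * B" using fB[rule_format, of "Wn E X i \<omega>"] cB[of i]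
        by (simp add: F_def)
      have "\<bar>(F i \<omega> - E (F i)) / real i\<bar> = \<bar>F i \<omega> - E (F i)\<bar> / real i" by simp
      also have "\<dots> \<le> 2 * B / real i" using n ia by (simp add: divide_right_mono)
      also have "\<dots> \<le> 2 * B / real a" using ia B0 by (simp add: divide_left_mono)
      finally show "\<bar>(F i \<omega> - E (F i)) / real i\<bar> \<le> 2 * B / real a" .
    qed
    also have "\<dots> = real (3 * a) * (2 * B / real a)" by simp
    also have "\<dots> = K" using a1 by (simp add: K_def)
    finally show ?thesis .
  qed
  define g where "g = (\<lambda>x::real. (max (-K) (min K x))\<^sup>2)"
  have EZ: "E (\<lambda>\<omega>. (Z l \<omega>)\<^sup>2) \<le> K\<^sup>2" if "l \<ge> 1" for l
  proof -
    have eq: "(\<lambda>\<omega>. (Z l \<omega>)\<^sup>2) = (\<lambda>\<omega>. g (Z l \<omega>))"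
    proof
      fix \<omega> show "(Z l \<omega>)\<^sup>2 = g (Z l \<omega>)" using Zb[OF that, of \<omega>] by (auto simp: g_def abs_le_iff)
    qed
    have gH: "(\<lambda>\<omega>. g (Z l \<omega>)) \<in> H" unfolding g_def by (rule sl_comp[OF sp clip_sq[OF K0] ZH])
    have "E (\<lambda>\<omega>. g (Z l \<omega>)) \<le> E (\<lambda>_. K\<^sup>2)"
    proof (rule sl_mono[OF sp gH sl_const[OF sp]])
      fix \<omega> have "\<bar>max (-K) (min K (Z l \<omega>))\<bar> \<le> K" using K0 by auto
      show "g (Z l \<omega>) \<le> K\<^sup>2" proof -
        have "\<bar>max (-K) (min K (Z l \<omega>))\<bar>\<^sup>2 \<le> K\<^sup>2" by (rule power_mono[OF \<open>\<bar>max (-K) (min K (Z l \<omega>))\<bar> \<le> K\<close>]) simp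
        then show ?thesis by (simp add: g_def)
      qed
    qed
    then show ?thesis using eq sl_Ec[OF sp] by simp
  qed
  show ?thesis
  proof (intro exI[of _ "K\<^sup>2 + 1"] conjI allI impI)
    show "K\<^sup>2 + 1 > 0" by (simp add: add_nonneg_pos)
  next
    fix n1 n2 :: nat assume n: "1 \<le> n1 \<and> n1 \<le> n2"
    have "(\<Sum>l=n1..n2. E (\<lambda>\<omega>. (\<Sum>i\<in>{4^(l-1)..<4^l}.
               (f (Wn E X i \<omega>) - E (\<lambda>\<omega>'. f (Wn E X i \<omega>'))) / real i)\<^sup>2))
          = (\<Sum>l=n1..n2. E (\<lambda>\<omega>. (Z l \<omega>)\<^sup>2))" by (simp add: Z_def F_def)
    also have "\<dots> \<le> (\<Sum>l=n1..n2. K\<^sup>2 + 1)"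
    proof (rule sum_mono)
      fix l assume "l \<in> {n1..n2}"
      then have "l \<ge> 1" using n by auto
      from EZ[OF this] show "E (\<lambda>\<omega>. (Z l \<omega>)\<^sup>2) \<le> K\<^sup>2 + 1" by simp
    qed
    also have "\<dots> = (K\<^sup>2 + 1) * real (n2 - n1 + 1)" using n by (simp add: Suc_diff_le)
    finally show "(\<Sum>l=n1..n2. E (\<lambda>\<omega>. (\<Sum>i\<in>{4^(l-1)..<4^l}.
               (f (Wn E X i \<omega>) - E (\<lambda>\<omega>'. f (Wn E X i \<omega>'))) / real i)\<^sup>2))
           \<le> (K\<^sup>2 + 1) * real (n2 - n1 + 1)" .
  qed
qed

end
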